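(* Let $U^{init}\subseteq C$ be a set of (uncovered) clients and let $F^{init}$ be a minimum-cost spanning forest of the complete graph on $C\cup R$ in which every component contains exactly one vertex of $R\cup(C\setminus U^{init})$, regarded as the root of that component. Apply the Tree Pruning procedure described in the context to each tree of $F^{init}$; let $F'$ be the resulting forest, $U'$ the set of clients that remain uncovered, and $\mathcal T_1,\dots,\mathcal T_m$ all tours output. Then $\sum_{i=1}^m c(\mathcal T_i)\le 2.5\,(c(F^{init})-c(F')) + \frac{1}{\beta}\,(\ell(U^{init})-\ell(U'))$.
   Context: Setting: disjoint finite sets $C$ (clients) and $R$ (depots, nonempty) in a metric space with costs $c$; integer capacity $k\ge 3$; $c(v,R)=\min_{r\in R}c(v,r)>0$ for every client. For a client $v$, $\ell_v=\frac{2}{k}c(v,R)$, and $\ell(S)=\sum_{v\in S}\ell_v$. Constant $\beta = 0.5902302342$. Costs of trees, forests and tours are total edge costs (counting multiplicity). Tree Pruning procedure for a rooted tree $T$ with root $v_T$: maintain the set $U$ of uncovered clients (initially the non-root vertices of $T$). For a vertex $w$, $T_w$ is the subtree rooted at $w$ and $U(T_w)$ its uncovered vertices. Repeat the following iteration as long as it covers some client: let $u$ be any deepest vertex of the current $T$ with $|U(T_u)|>k$, or $u=v_T$ if none exists; let $u_1,u_2,\dots$ be the children of $u$. Grouping: put each $T_{u_i}$ in its own group, then while two groups can be merged so that the merged group has at most $k$ uncovered clients, merge them. For a group $G$, $c(G)$ is the total cost of its subtrees plus the edges joining their roots to $u$, and $U(G)$ the uncovered clients in its subtrees. Tour $\mathcal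 T(G)$: double all edges of the subtrees of $G$ and their edges to $u$, add two copies of a cheapest edge between a depot $r'$ and a client of $U(G)$, and shortcut the Eulerian tour to visit only $\{r'\}\cup U(G)$. For two distinct groups $G,G'$, let $A$ be the $k-|U(G)|$ clients of $U(G')$ with largest $\ell_v$; tour $\mathcal T(G,G')$: double all edges of subtrees of $G$ and $G'$ and their edges to $u$, add two copies of a cheapest edge between a depot $r'$ and a client of $U(G)\cup A$, shortcut to visit only $\{r'\}\cup U(G)\cup A$. In the iteration: if some group $G_i$ has $c(\mathcal T(G_i))\le 2.5\,c(G_i)+\frac1\beta\ell(U(G_i))$, output $\mathcal T(G_i)$, delete the subtrees of $G_i$ (with their edges to $u$) from $T$, and remove $U(G_i)$ from $U$; else if two distinct groups $G_i,G_j$ satisfy $c(\mathcal T(G_i,G_j))\le 2.5\,c(G_i)+\frac1\beta\ell(U(G_i)\cup A)$ (with $A$ defined from $G=G_i$, $G'=G_j$), output $\mathcal T(G_i,G_j)$, delete only the subtrees of $G_i$ from $T$, and remove $U(G_i)\cup A$ from $U$ (the vertices of $A$ stay in $T$ but are covered). *)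

theory Defs
  imports Complex_Main "HOL-Library.Multiset"
begin

definition beta :: real where "beta = 0.5902302342"

definition metric :: "('a \<Rightarrow> 'a \<Rightarrow> real) \<Rightarrow> bool" where
  "metric c \<longleftrightarrow> (\<forall>x y. c x y = 0 \<longleftrightarrow> x = y) \<and> (\<forall>x y. c x y = c y x)
     \<and> (\<forall>x y z. c x z \<le> c x y + c y z)"

definition cdist :: "('a \<Rightarrow> 'a \<Rightarrow> real) \<Rightarrow> 'a \<Rightarrow> 'a set \<Rightarrow> real" where
  "cdist c v R = Min ((\<lambda>r. c v r) ` R)"

definition ell :: "('a \<Rightarrow> 'a \<Rightarrow> real) \<Rightarrow> 'a set \<Rightarrow> nat \<Rightarrow> 'a \<Rightarrow> real" where
  "ell c R k v = 2 / real k * cdist c v R"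

definition ellS :: "('a \<Rightarrow> 'a \<Rightarrow> real) \<Rightarrow> 'a set \<Rightarrow> nat \<Rightarrow> 'a set \<Rightarrow> real" where
  "ellS c R k S = (\<Sum>v\<in>S. ell c R k v)"

definition edge_cost :: "('a \<Rightarrow> 'a \<Rightarrow> real) \<Rightarrow> 'a set \<Rightarrow> real" where
  "edge_cost c e = (THE w. \<exists>x y. e = {x, y} \<and> w = c x y)"

definition forest_cost :: "('a \<Rightarrow> 'a \<Rightarrow> real) \<Rightarrow> 'a set set \<Rightarrow> real" where
  "forest_cost c F = (\<Sum>e\<in>F. edge_cost c e)"

definition is_edges :: "'a set \<Rightarrow> 'a set set \<Rightarrow> bool" where
  "is_edges V F \<longleftrightarrow> (\<forall>e\<in>F. \<exists>x y. x \<noteq> y \<and> x \<in> V \<and> y \<in> V \<and> e = {x, y})"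

definition connected_in :: "'a set set \<Rightarrow> 'a \<Rightarrow> 'a \<Rightarrow> bool" where
  "connected_in F = (\<lambda>x y. {x, y} \<in> F)\<^sup>*\<^sup>*"

definition acyclic_edges :: "'a set set \<Rightarrow> bool" where
  "acyclic_edges F \<longleftrightarrow> (\<forall>e\<in>F. \<forall>x y. e = {x, y} \<and> x \<noteq> y \<longrightarrow> \<not> connected_in (F - {e}) x y)"

definition rooted_forest :: "'a set \<Rightarrow> 'a set \<Rightarrow> 'a set set \<Rightarrow> bool" where
  "rooted_forest V S F \<longleftrightarrow> is_edges V F \<and> acyclic_edges F
     \<and> (\<forall>x\<in>V. \<exists>!s. s \<in> S \<and> connected_in F x s)"

definition subtree :: "('a \<Rightarrow> 'a) \<Rightarrow> 'a set \<Rightarrow> 'a \<Rightarrow> 'a set" where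
  "subtree par V w = {x \<in> V. \<exists>n. (par ^^ n) x = w}"

definition depth :: "('a \<Rightarrow> 'a) \<Rightarrow> 'a \<Rightarrow> 'a \<Rightarrow> nat" where
  "depth par rt x = (LEAST n. (par ^^ n) x = rt)"

definition children :: "('a \<Rightarrow> 'a) \<Rightarrow> 'a \<Rightarrow> 'a set \<Rightarrow> 'a \<Rightarrow> 'a set" where
  "children par rt V u = {x \<in> V. x \<noteq> rt \<and> par x = u}"

definition tree_edges :: "('a \<Rightarrow> 'a) \<Rightarrow> 'a \<Rightarrow> 'a set \<Rightarrow> 'a set set" where
  "tree_edges par rt V = {{x, par x} | x. x \<in> V - {rt}}"

definition valid_u :: "('a \<Rightarrow> 'a) \<Rightarrow> 'a \<Rightarrow> nat \<Rightarrow> 'a set \<Rightarrow> 'a set \<Rightarrow> 'a \<Rightarrow> bool" where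
  "valid_u par rt k V U u \<longleftrightarrow>
     (if \<exists>w\<in>V. card (U \<inter> subtree par V w) > k
      then u \<in> V \<and> card (U \<inter> subtree par V u) > k
           \<and> (\<forall>w\<in>V. card (U \<inter> subtree par V w) > k \<longrightarrow> depth par rt w \<le> depth par rt u)
      else u = rt)"

text \<open>Vertices of the subtrees of a group G (a set of children of u), its uncovered
  clients and its cost (subtree edges plus edges to u).\<close>
definition gverts :: "('a \<Rightarrow> 'a) \<Rightarrow> 'a set \<Rightarrow> 'a set \<Rightarrow> 'a set" where
  "gverts par V G = (\<Union>w\<in>G. subtree par V w)"

definition gU :: "('a \<Rightarrow> 'a) \<Rightarrow> 'a set \<Rightarrow> 'a set \<Rightarrow> 'a set \<Rightarrow> 'a set" where
  "gU par V U G = U \<inter> gverts par V G"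

definition gcost :: "('a \<Rightarrow> 'a \<Rightarrow> real) \<Rightarrow> ('a \<Rightarrow> 'a) \<Rightarrow> 'a set \<Rightarrow> 'a set \<Rightarrow> real" where
  "gcost c par V G = (\<Sum>x\<in>gverts par V G. c x (par x))"

inductive grp_reach :: "('a set \<Rightarrow> nat) \<Rightarrow> nat \<Rightarrow> 'a set set \<Rightarrow> 'a set set \<Rightarrow> bool"
  for f k P0 where
  start: "grp_reach f k P0 P0"
| merge: "grp_reach f k P0 P \<Longrightarrow> G \<in> P \<Longrightarrow> G' \<in> P \<Longrightarrow> G \<noteq> G' \<Longrightarrow> f (G \<union> G') \<le> k
          \<Longrightarrow> grp_reach f k P0 (insert (G \<union> G') (P - {G, G'}))"

definition valid_grouping :: "('a \<Rightarrow> 'a) \<Rightarrow> 'a \<Rightarrow> nat \<Rightarrow> 'a set \<Rightarrow> 'a set \<Rightarrow> 'a \<Rightarrow> 'a set set \<Rightarrow> bool" where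
  "valid_grouping par rt k V U u P \<longleftrightarrow>
     grp_reach (\<lambda>G. card (gU par V U G)) k {{w} | w. w \<in> children par rt V u} P
     \<and> \<not> (\<exists>G\<in>P. \<exists>G'\<in>P. G \<noteq> G' \<and> card (gU par V U (G \<union> G')) \<le> k)"

definition cheapest_edge :: "('a \<Rightarrow> 'a \<Rightarrow> real) \<Rightarrow> 'a set \<Rightarrow> 'a set \<Rightarrow> 'a \<Rightarrow> 'a \<Rightarrow> bool" where
  "cheapest_edge c R T r' v \<longleftrightarrow> r' \<in> R \<and> v \<in> T \<and> (\<forall>r\<in>R. \<forall>y\<in>T. c r' v \<le> c r y)"

definition euler_circuit :: "'a set multiset \<Rightarrow> 'a list \<Rightarrow> bool" where
  "euler_circuit M w \<longleftrightarrow> length w \<ge> 2 \<and> hd w = last w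
     \<and> mset (map (\<lambda>i. {w ! i, w ! Suc i}) [0..<length w - 1]) = M"

text \<open>Shortcutting: keep only the first visit of each vertex of X (closing vertex dropped);
  the result is read as a cyclic tour.\<close>
definition shortcut :: "'a set \<Rightarrow> 'a list \<Rightarrow> 'a list" where
  "shortcut X w = rev (remdups (rev (filter (\<lambda>x. x \<in> X) (butlast w))))"

definition tour_cost :: "('a \<Rightarrow> 'a \<Rightarrow> real) \<Rightarrow> 'a list \<Rightarrow> real" where
  "tour_cost c t = (\<Sum>i<length t. c (t ! i) (t ! (Suc i mod length t)))"

definition double_edges :: "('a \<Rightarrow> 'a) \<Rightarrow> 'a set \<Rightarrow> 'a set multiset" where
  "double_edges par X = (\<Sum>x\<in>X. {#{x, par x}, {x, par x}#})"

definition is_tour :: "('a \<Rightarrow> 'a \<Rightarrow> real) \<Rightarrow> 'a set \<Rightarrow> ('a \<Rightarrow> 'a) \<Rightarrow> 'a set \<Rightarrow> 'a set \<Rightarrow> 'a list \<Rightarrow> bool" where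
  "is_tour c R par X T t \<longleftrightarrow> (\<exists>r' v w. cheapest_edge c R T r' v
     \<and> euler_circuit (double_edges par X + {#{r', v}, {r', v}#}) w
     \<and> t = shortcut (insert r' T) w)"

definition pair_set_ok :: "('a \<Rightarrow> 'a \<Rightarrow> real) \<Rightarrow> 'a set \<Rightarrow> nat \<Rightarrow> ('a \<Rightarrow> 'a) \<Rightarrow> 'a set \<Rightarrow> 'a set
     \<Rightarrow> 'a set \<Rightarrow> 'a set \<Rightarrow> 'a set \<Rightarrow> bool" where
  "pair_set_ok c R k par V U G G' A \<longleftrightarrow> A \<subseteq> gU par V U G'
     \<and> card A = k - card (gU par V U G)
     \<and> (\<forall>a\<in>A. \<forall>b\<in>gU par V U G' - A. ell c R k b \<le> ell c R k a)"

text \<open>tau1 G: the tour T(G); tau2 G G' = (A, T(G,G')).\<close>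
definition iter_ok :: "('a \<Rightarrow> 'a \<Rightarrow> real) \<Rightarrow> 'a set \<Rightarrow> nat \<Rightarrow> ('a \<Rightarrow> 'a) \<Rightarrow> 'a
     \<Rightarrow> 'a set \<Rightarrow> 'a set \<Rightarrow> 'a \<Rightarrow> 'a set set \<Rightarrow> ('a set \<Rightarrow> 'a list)
     \<Rightarrow> ('a set \<Rightarrow> 'a set \<Rightarrow> 'a set \<times> 'a list) \<Rightarrow> bool" where
  "iter_ok c R k par rt V U u P tau1 tau2 \<longleftrightarrow>
     valid_u par rt k V U u \<and> valid_grouping par rt k V U u P
     \<and> (\<forall>G\<in>P. gU par V U G \<noteq> {} \<longrightarrow> is_tour c R par (gverts par V G) (gU par V U G) (tau1 G))
     \<and> (\<forall>G\<in>P. \<forall>G'\<in>P. G \<noteq> G' \<longrightarrow>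
          pair_set_ok c R k par V U G G' (fst (tau2 G G'))
          \<and> is_tour c R par (gverts par V G \<union> gverts par V G')
               (gU par V U G \<union> fst (tau2 G G')) (snd (tau2 G G')))"

definition cond1 :: "('a \<Rightarrow> 'a \<Rightarrow> real) \<Rightarrow> 'a set \<Rightarrow> nat \<Rightarrow> ('a \<Rightarrow> 'a) \<Rightarrow> 'a set \<Rightarrow> 'a set
     \<Rightarrow> 'a set set \<Rightarrow> ('a set \<Rightarrow> 'a list) \<Rightarrow> 'a set \<Rightarrow> bool" where
  "cond1 c R k par V U P tau1 G \<longleftrightarrow> G \<in> P \<and> gU par V U G \<noteq> {}
     \<and> tour_cost c (tau1 G) \<le> 2.5 * gcost c par V G + ellS c R k (gU par V U G) / beta"

definition cond2 :: "('a \<Rightarrow> 'a \<Rightarrow> real) \<Rightarrow> 'a set \<Rightarrow> nat \<Rightarrow> ('a \<Rightarrow> 'a) \<Rightarrow> 'a set \<Rightarrow> 'a set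
     \<Rightarrow> 'a set set \<Rightarrow> ('a set \<Rightarrow> 'a set \<Rightarrow> 'a set \<times> 'a list) \<Rightarrow> 'a set \<Rightarrow> 'a set \<Rightarrow> bool" where
  "cond2 c R k par V U P tau2 G G' \<longleftrightarrow> G \<in> P \<and> G' \<in> P \<and> G \<noteq> G'
     \<and> tour_cost c (snd (tau2 G G'))
        \<le> 2.5 * gcost c par V G + ellS c R k (gU par V U G \<union> fst (tau2 G G')) / beta"

definition prune_step :: "('a \<Rightarrow> 'a \<Rightarrow> real) \<Rightarrow> 'a set \<Rightarrow> nat \<Rightarrow> ('a \<Rightarrow> 'a) \<Rightarrow> 'a
     \<Rightarrow> 'a set \<times> 'a set \<Rightarrow> 'a list \<Rightarrow> 'a set \<times> 'a set \<Rightarrow> bool" where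
  "prune_step c R k par rt s t s' \<longleftrightarrow> (case s of (V, U) \<Rightarrow>
     (\<exists>u P tau1 tau2. iter_ok c R k par rt V U u P tau1 tau2 \<and>
       ((\<exists>G. cond1 c R k par V U P tau1 G \<and> t = tau1 G
            \<and> s' = (V - gverts par V G, U - gU par V U G))
        \<or> ((\<nexists>G. cond1 c R k par V U P tau1 G) \<and>
           (\<exists>G G'. cond2 c R k par V U P tau2 G G' \<and> t = snd (tau2 G G')
            \<and> s' = (V - gverts par V G, U - (gU par V U G \<union> fst (tau2 G G'))))))))"

definition prune_stop :: "('a \<Rightarrow> 'a \<Rightarrow> real) \<Rightarrow> 'a set \<Rightarrow> nat \<Rightarrow> ('a \<Rightarrow> 'a) \<Rightarrow> 'a
     \<Rightarrow> 'a set \<times> 'a set \<Rightarrow> bool" where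
  "prune_stop c R k par rt s \<longleftrightarrow> (case s of (V, U) \<Rightarrow>
     (\<exists>u P tau1 tau2. iter_ok c R k par rt V U u P tau1 tau2
       \<and> (\<nexists>G. cond1 c R k par V U P tau1 G)
       \<and> (\<nexists>G G'. cond2 c R k par V U P tau2 G G')))"

inductive prune_run :: "('a \<Rightarrow> 'a \<Rightarrow> real) \<Rightarrow> 'a set \<Rightarrow> nat \<Rightarrow> ('a \<Rightarrow> 'a) \<Rightarrow> 'a
     \<Rightarrow> 'a set \<times> 'a set \<Rightarrow> 'a list list \<Rightarrow> 'a set \<times> 'a set \<Rightarrow> bool"
  for c R k par rt where
  finish: "prune_stop c R k par rt s \<Longrightarrow> prune_run c R k par rt s [] s"
| iterate: "prune_step c R k par rt s t s' \<Longrightarrow> prune_run c R k par rt s' ts s''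
         \<Longrightarrow> prune_run c R k par rt s (t # ts) s''"

end

theory Submission
  imports Defs
begin

lemma arith_aux:
  fixes S a b v' f u' g x y v u bt K :: real
  assumes "S = a + b" "b \<le> K * (v' - f) + (u' - g)/bt" "a \<le> K * x + y / bt"
    "v = x + v'" "u = y + u'"
  shows "S \<le> K * (v - f) + (u - g)/bt"
proof -
  have "(u - g)/bt = y/bt + (u' - g)/bt" using assms(5) by (simp add: add_divide_distrib diff_divide_distrib)
  moreover have "K * (v - f) = K * x + K * (v' - f)" using assms(4) by (simp add: algebra_simps)
  ultimately show ?thesis using assms(1,2,3) by linarith
qed

lemma sum_aux:
  fixes K bt :: real
  shows "(\<Sum>s\<in>A. K * (a s - b s) + (d s - e s) / bt) = K * (sum a A - sum b A) + (sum d A - sum e A) / bt"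
  by (simp add: sum.distrib sum_subtractf sum_distrib_left sum_divide_distrib right_diff_distrib diff_divide_distrib)

lemma step_bound:
  assumes "prune_step c R k par rt (V,U) t (V',U')"
  shows "\<exists>X Y. X \<subseteq> V \<and> Y \<subseteq> U \<and> V' = V - X \<and> U' = U - Y \<and>
     tour_cost c t \<le> 2.5 * (\<Sum>x\<in>X. c x (par x)) + ellS c R k Y / beta"
proof -
  have "\<exists>u P tau1 tau2. iter_ok c R k par rt V U u P tau1 tau2 \<and>
       ((\<exists>G. cond1 c R k par V U P tau1 G \<and> t = tau1 G
            \<and> (V',U') = (V - gverts par V G, U - gU par V U G))
        \<or> ((\<nexists>G. cond1 c R k par V U P tau1 G) \<and>
           (\<exists>G G'. cond2 c R k par V U P tau2 G G' \<and> t = snd (tau2 G G')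
            \<and> (V',U') = (V - gverts par V G, U - (gU par V U G \<union> fst (tau2 G G'))))))"
    using assms by (simp only: prune_step_def prod.case)
  then obtain u P tau1 tau2 where it: "iter_ok c R k par rt V U u P tau1 tau2" and
    cs: "(\<exists>G. cond1 c R k par V U P tau1 G \<and> t = tau1 G
            \<and> (V',U') = (V - gverts par V G, U - gU par V U G))
        \<or> ((\<nexists>G. cond1 c R k par V U P tau1 G) \<and>
           (\<exists>G G'. cond2 c R k par V U P tau2 G G' \<and> t = snd (tau2 G G')
            \<and> (V',U') = (V - gverts par V G, U - (gU par V U G \<union> fst (tau2 G G')))))"
    by (elim exE conjE)
  have gv: "gverts par V G \<subseteq> V" for G unfolding gverts_def subtree_def by auto
  have gu: "gU par V U G \<subseteq> U" for G unfolding gU_def by auto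
  from cs show ?thesis
  proof
    assume "\<exists>G. cond1 c R k par V U P tau1 G \<and> t = tau1 G
            \<and> (V',U') = (V - gverts par V G, U - gU par V U G)"
    then obtain G where "cond1 c R k par V U P tau1 G" "t = tau1 G"
       "V' = V - gverts par V G" "U' = U - gU par V U G" by auto
    then show ?thesis using gv[of G] gu[of G] unfolding cond1_def gcost_def
      by (intro exI[of _ "gverts par V G"] exI[of _ "gU par V U G"]) simp
  next
    assume "(\<nexists>G. cond1 c R k par V U P tau1 G) \<and>
           (\<exists>G G'. cond2 c R k par V U P tau2 G G' \<and> t = snd (tau2 G G')
            \<and> (V',U') = (V - gverts par V G, U - (gU par V U G \<union> fst (tau2 G G'))))"
    then obtain G G' where c2: "cond2 c R k par V U P tau2 G G'" "t = snd (tau2 G G')"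
       "V' = V - gverts par V G" "U' = U - (gU par V U G \<union> fst (tau2 G G'))" by auto
    then have "G \<in> P" "G' \<in> P" "G \<noteq> G'" unfolding cond2_def by auto
    then have "fst (tau2 G G') \<subseteq> gU par V U G'" using it unfolding iter_ok_def pair_set_ok_def by simp
    then have "gU par V U G \<union> fst (tau2 G G') \<subseteq> U" using gu by blast
    then show ?thesis using c2 gv[of G] unfolding cond2_def gcost_def
      by (intro exI[of _ "gverts par V G"] exI[of _ "gU par V U G \<union> fst (tau2 G G')"]) simp
  qed
qed

lemma run_bound:
  assumes "prune_run c R k par rt s ts s''" "finite (fst s)" "finite (snd s)"
  shows "(\<Sum>t\<leftarrow>ts. tour_cost c t) \<le> 2.5 * ((\<Sum>x\<in>fst s. c x (par x)) - (\<Sum>x\<in>fst s''. c x (par x)))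
      + (ellS c R k (snd s) - ellS c R k (snd s'')) / beta \<and> fst s'' \<subseteq> fst s \<and> snd s'' \<subseteq> snd s"
  using assms
proof (induction rule: prune_run.induct)
  case (finish s)
  then show ?case by simp
next
  case (iterate s t s' ts s'')
  obtain V U where s: "s = (V,U)" by fastforce
  obtain V' U' where s': "s' = (V',U')" by fastforce
  obtain X Y where XY: "X \<subseteq> V" "Y \<subseteq> U" "V' = V - X" "U' = U - Y"
    "tour_cost c t \<le> 2.5 * (\<Sum>x\<in>X. c x (par x)) + ellS c R k Y / beta"
    using step_bound[of c R k par rt V U t V' U'] iterate.hyps(1) s s' by blast
  have fV: "finite V" "finite U" using iterate.prems s by auto
  have IH: "(\<Sum>t\<leftarrow>ts. tour_cost c t) \<le> 2.5 * ((\<Sum>x\<in>V'. c x (par x)) - (\<Sum>x\<in>fst s''. c x (par x)))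
      + (ellS c R k U' - ellS c R k (snd s'')) / beta \<and> fst s'' \<subseteq> V' \<and> snd s'' \<subseteq> U'"
    using iterate.IH s' XY fV by auto
  have e1: "(\<Sum>x\<in>V. c x (par x)) = (\<Sum>x\<in>X. c x (par x)) + (\<Sum>x\<in>V'. c x (par x))"
    using XY fV by (metis add.commute sum.subset_diff)
  have e2: "ellS c R k U = ellS c R k Y + ellS c R k U'"
    unfolding ellS_def using XY fV by (metis add.commute sum.subset_diff)
  have "(ellS c R k U - ellS c R k (snd s'')) / beta = ellS c R k Y / beta + (ellS c R k U' - ellS c R k (snd s'')) / beta"
    using e2 by (simp add: add_divide_distrib[symmetric])
  note E = this
  have "fst s'' \<subseteq> fst s \<and> snd s'' \<subseteq> snd s" using IH XY s by auto
  moreover have "(\<Sum>t\<leftarrow>t#ts. tour_cost c t) \<le> 2.5 * ((\<Sum>x\<in>V. c x (par x)) - (\<Sum>x\<in>fst s''. c x (par x)))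
      + (ellS c R k U - ellS c R k (snd s'')) / beta"
  proof -
    have "(\<Sum>t\<leftarrow>t#ts. tour_cost c t) = tour_cost c t + (\<Sum>t\<leftarrow>ts. tour_cost c t)" by simp
    then show ?thesis using IH[THEN conjunct1] XY(5) e1 e2 by (rule arith_aux)
  qed
  ultimately show ?case using s by simp
qed

lemma funpow_fix: "par s = s \<Longrightarrow> (par ^^ n) s = s"
  by (induction n) auto

lemma edge_cost_pair:
  assumes "metric c" shows "edge_cost c {x, y} = c x y"
  unfolding edge_cost_def
proof (rule the_equality)
  show "\<exists>a b. {x, y} = {a, b} \<and> c x y = c a b" by blast
next
  fix w assume "\<exists>a b. {x, y} = {a, b} \<and> w = c a b"
  then obtain a b where "{x, y} = {a, b}" "w = c a b" by blast
  then show "w = c x y" using assms unfolding metric_def by (auto simp: doubleton_eq_iff)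
qed

lemma root_unique:
  assumes "(par ^^ n) x = s" "(par ^^ m) x = s'" "par s = s" "par s' = s'"
  shows "s = s'"
proof (cases "n \<le> m")
  case True
  then have "(par ^^ m) x = (par ^^ (m - n)) ((par ^^ n) x)"
    by (metis funpow_add le_add_diff_inverse2 comp_apply)
  then show ?thesis using assms funpow_fix[of par s] by simp
next
  case False
  then have "(par ^^ n) x = (par ^^ (n - m)) ((par ^^ m) x)"
    by (metis funpow_add le_add_diff_inverse2 comp_apply nat_le_linear)
  then show ?thesis using assms funpow_fix[of par s'] by simp
qed

theorem corollary1:
  fixes c :: "'a \<Rightarrow> 'a \<Rightarrow> real" and C R Uinit :: "'a set" and k :: nat
    and F :: "'a set set" and par :: "'a \<Rightarrow> 'a"
    and tours :: "'a \<Rightarrow> 'a list list" and fin :: "'a \<Rightarrow> 'a set \<times> 'a set"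
  assumes "metric c"
    and "finite C" and "finite R" and "C \<inter> R = {}" and "R \<noteq> {}" and "k \<ge> 3"
    and "\<forall>v\<in>C. cdist c v R > 0"
    and "Uinit \<subseteq> C"
    and "rooted_forest (C \<union> R) (R \<union> (C - Uinit)) F"
    and "\<forall>F'. rooted_forest (C \<union> R) (R \<union> (C - Uinit)) F' \<longrightarrow> forest_cost c F \<le> forest_cost c F'"
    and "\<forall>v\<in>R \<union> (C - Uinit). par v = v"
    and "\<forall>v\<in>(C \<union> R) - (R \<union> (C - Uinit)). par v \<in> C \<union> R"
    and "\<forall>v\<in>C \<union> R. \<exists>n. (par ^^ n) v \<in> R \<union> (C - Uinit)"
    and "F = {{v, par v} | v. v \<in> (C \<union> R) - (R \<union> (C - Uinit))}"
    and "\<forall>s\<in>R \<union> (C - Uinit). prune_run c R k par s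
           (subtree par (C \<union> R) s, subtree par (C \<union> R) s - {s}) (tours s) (fin s)"
  shows "(\<Sum>s\<in>R \<union> (C - Uinit). \<Sum>t\<leftarrow>tours s. tour_cost c t)
    \<le> 2.5 * (forest_cost c F - forest_cost c (\<Union>s\<in>R \<union> (C - Uinit). tree_edges par s (fst (fin s))))
      + (ellS c R k Uinit - ellS c R k (\<Union>s\<in>R \<union> (C - Uinit). snd (fin s))) / beta"
proof -
  define Rt where "Rt = R \<union> (C - Uinit)"
  define Vall where "Vall = C \<union> R"
  define g where "g x = c x (par x)" for x
  define V0 where "V0 s = subtree par Vall s" for s
  have met: "c x x = 0" for x using assms(1) unfolding metric_def by simp
  have fixR: "par v = v" if "v \<in> Rt" for v using assms(11) that Rt_def by simp
  have reach: "\<exists>n. (par ^^ n) v \<in> Rt" if "v \<in> Vall" for v using assms(13) that Rt_def Vall_def by simp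
  have finV: "finite Vall" using assms(2,3) Vall_def by simp
  have RtV: "Rt \<subseteq> Vall" using Rt_def Vall_def by auto
  have finRt: "finite Rt" using finV RtV finite_subset by blast
  have N: "Vall - Rt = Uinit" using assms(4,8) Rt_def Vall_def by auto
  have g0: "g r = 0" if "r \<in> Rt" for r using fixR[OF that] met g_def by simp
  have V0sub: "V0 s \<subseteq> Vall" for s unfolding V0_def subtree_def by auto
  have sV0: "s \<in> V0 s" if "s \<in> Rt" for s
    unfolding V0_def subtree_def using that RtV by (auto intro: exI[of _ 0])
  have disj: "V0 s \<inter> V0 s' = {}" if "s \<in> Rt" "s' \<in> Rt" "s \<noteq> s'" for s s'
    using that root_unique[where s=s and s'=s' and par=par] fixR unfolding V0_def subtree_def by blast
  have Vun: "(\<Union>s\<in>Rt. V0 s) = Vall"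
  proof
    show "(\<Union>s\<in>Rt. V0 s) \<subseteq> Vall" using V0sub by blast
    show "Vall \<subseteq> (\<Union>s\<in>Rt. V0 s)"
    proof
      fix x assume x: "x \<in> Vall"
      then obtain n where "(par ^^ n) x \<in> Rt" using reach by blast
      then show "x \<in> (\<Union>s\<in>Rt. V0 s)" using x unfolding V0_def subtree_def by blast
    qed
  qed
  have V0N: "V0 s - {s} \<subseteq> Vall - Rt" if "s \<in> Rt" for s
  proof
    fix x assume x: "x \<in> V0 s - {s}"
    then have "x \<in> subtree par Vall s" unfolding V0_def by simp
    then obtain n where n: "(par ^^ n) x = s" unfolding subtree_def by blast
    have "x \<notin> Rt"
    proof
      assume "x \<in> Rt"
      then have "(par ^^ n) x = x" using funpow_fix[of par x n] fixR[of x] by simp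
      then show False using n x by simp
    qed
    then show "x \<in> Vall - Rt" using x V0sub by blast
  qed
  have Uun: "(\<Union>s\<in>Rt. V0 s - {s}) = Uinit"
  proof
    show "(\<Union>s\<in>Rt. V0 s - {s}) \<subseteq> Uinit" using V0N N by (simp add: UN_subset_iff)
    show "Uinit \<subseteq> (\<Union>s\<in>Rt. V0 s - {s})"
    proof
      fix x assume x: "x \<in> Uinit"
      then have xV: "x \<in> Vall" "x \<notin> Rt" using N by auto
      then obtain n where n: "(par ^^ n) x \<in> Rt" using reach by blast
      have "x \<in> V0 ((par ^^ n) x)" unfolding V0_def subtree_def using xV by auto
      moreover have "x \<noteq> (par ^^ n) x" using n xV by auto
      ultimately show "x \<in> (\<Union>s\<in>Rt. V0 s - {s})" using n by blast
    qed
  qed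
  have inj: "inj_on (\<lambda>x. {x, par x}) (Vall - Rt)"
  proof (rule inj_onI)
    fix x y assume x: "x \<in> Vall - Rt" and y: "y \<in> Vall - Rt" and e: "{x, par x} = {y, par y}"
    show "x = y"
    proof (rule ccontr)
      assume "x \<noteq> y"
      then have xy: "par y = x" "par x = y" using e by (metis doubleton_eq_iff)+
      have cyc: "(par ^^ n) x \<in> {x, y}" for n
      proof (induction n)
        case (Suc n)
        then show ?case using xy by (auto simp del: funpow.simps simp: funpow_Suc_right[symmetric] funpow.simps(2))
      qed simp
      obtain n where "(par ^^ n) x \<in> Rt" using reach x by blast
      then show False using x y cyc[of n] by auto
    qed
  qed
  let ?W = "\<lambda>V. \<Sum>x\<in>V. g x"
  have run: "(\<Sum>t\<leftarrow>tours s. tour_cost c t) \<le> 2.5 * (?W (V0 s) - ?W (fst (fin s)))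
      + (ellS c R k (V0 s - {s}) - ellS c R k (snd (fin s))) / beta
      \<and> fst (fin s) \<subseteq> V0 s \<and> snd (fin s) \<subseteq> V0 s - {s}" if "s \<in> Rt" for s
  proof -
    have "prune_run c R k par s (V0 s, V0 s - {s}) (tours s) (fin s)"
      using assms(15) that unfolding Rt_def V0_def Vall_def by blast
    moreover have "finite (V0 s)" using V0sub finV finite_subset by blast
    ultimately show ?thesis using run_bound[of c R k par s "(V0 s, V0 s - {s})"] unfolding g_def by simp
  qed
  have finV0: "finite (V0 s)" for s using V0sub finV finite_subset by blast
  have S1: "(\<Sum>s\<in>Rt. ?W (V0 s)) = forest_cost c F"
  proof -
    have "(\<Sum>s\<in>Rt. ?W (V0 s)) = ?W Vall"
      using sum.UNION_disjoint[of Rt V0 g] finRt finV0 disj Vun by simp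
    also have "\<dots> = ?W (Vall - Rt)"
      using sum.mono_neutral_right[of Vall "Vall - Rt" g] finV g0 by auto
    also have "\<dots> = forest_cost c F"
    proof -
      have F: "F = (\<lambda>x. {x, par x}) ` (Vall - Rt)" using assms(14) Rt_def Vall_def by blast
      show ?thesis unfolding F forest_cost_def
        using sum.reindex[OF inj, of "edge_cost c"] edge_cost_pair[OF assms(1)] g_def by simp
    qed
    finally show ?thesis .
  qed
  define Vf where "Vf s = fst (fin s)" for s
  define Uf where "Uf s = snd (fin s)" for s
  have Vfs: "Vf s \<subseteq> V0 s" "Uf s \<subseteq> V0 s - {s}" if "s \<in> Rt" for s
    using run[OF that] unfolding Vf_def Uf_def by simp_all
  have finVf: "finite (Vf s)" "finite (Uf s)" if "s \<in> Rt" for s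
    using finite_subset[OF Vfs(1)[OF that] finV0] finite_subset[OF Vfs(2)[OF that]] finV0[of s] by auto
  have disjf: "(Vf i - {i}) \<inter> (Vf j - {j}) = {}" "Uf i \<inter> Uf j = {}"
    if "i \<in> Rt" "j \<in> Rt" "i \<noteq> j" for i j
    using disj[OF that] Vfs(1)[OF that(1)] Vfs(1)[OF that(2)] Vfs(2)[OF that(1)] Vfs(2)[OF that(2)] by blast+
  have S2: "(\<Sum>s\<in>Rt. ?W (Vf s)) = forest_cost c (\<Union>s\<in>Rt. tree_edges par s (Vf s))"
  proof -
    have "(\<Sum>s\<in>Rt. ?W (Vf s)) = (\<Sum>s\<in>Rt. ?W (Vf s - {s}))"
    proof (rule sum.cong)
      fix s assume s: "s \<in> Rt"
      have "finite (Vf s)" using finVf[OF s] by simp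
      then show "?W (Vf s) = ?W (Vf s - {s})" using sum_diff1[of "Vf s" g s] g0[OF s] by simp
    qed simp
    also have "\<dots> = ?W (\<Union>s\<in>Rt. Vf s - {s})"
    proof (rule sum.UNION_disjoint[symmetric])
      show "finite Rt" by fact
      show "\<forall>s\<in>Rt. finite (Vf s - {s})" using finVf by simp
      show "\<forall>i\<in>Rt. \<forall>j\<in>Rt. i \<noteq> j \<longrightarrow> (Vf i - {i}) \<inter> (Vf j - {j}) = {}"
        using disjf(1) by simp
    qed
    also have "\<dots> = forest_cost c (\<Union>s\<in>Rt. tree_edges par s (Vf s))"
    proof -
      have sub: "(\<Union>s\<in>Rt. Vf s - {s}) \<subseteq> Vall - Rt"
      proof (rule UN_least)
        fix s assume s: "s \<in> Rt"
        show "Vf s - {s} \<subseteq> Vall - Rt" using Vfs(1)[OF s] V0N[OF s] by blast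
      qed
      have E: "(\<Union>s\<in>Rt. tree_edges par s (Vf s)) = (\<lambda>x. {x, par x}) ` (\<Union>s\<in>Rt. Vf s - {s})"
        unfolding tree_edges_def by blast
      show ?thesis unfolding E forest_cost_def
        using sum.reindex[OF inj_on_subset[OF inj sub], of "edge_cost c"] edge_cost_pair[OF assms(1)] g_def by simp
    qed
    finally show ?thesis .
  qed
  have S3: "(\<Sum>s\<in>Rt. ellS c R k (V0 s - {s})) = ellS c R k Uinit"
    unfolding ellS_def Uun[symmetric]
  proof (rule sum.UNION_disjoint[symmetric])
    show "finite Rt" by fact
    show "\<forall>s\<in>Rt. finite (V0 s - {s})" using finV0 by blast
    show "\<forall>i\<in>Rt. \<forall>j\<in>Rt. i \<noteq> j \<longrightarrow> (V0 i - {i}) \<inter> (V0 j - {j}) = {}"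
    proof (intro ballI impI)
      fix i j assume "i \<in> Rt" "j \<in> Rt" "i \<noteq> j"
      then show "(V0 i - {i}) \<inter> (V0 j - {j}) = {}" using disj[of i j] by blast
    qed
  qed
  have S4: "(\<Sum>s\<in>Rt. ellS c R k (Uf s)) = ellS c R k (\<Union>s\<in>Rt. Uf s)"
    unfolding ellS_def
  proof (rule sum.UNION_disjoint[symmetric])
    show "finite Rt" by fact
    show "\<forall>s\<in>Rt. finite (Uf s)" using finVf by simp
    show "\<forall>i\<in>Rt. \<forall>j\<in>Rt. i \<noteq> j \<longrightarrow> Uf i \<inter> Uf j = {}"
      using disjf(2) by simp
  qed
  have "(\<Sum>s\<in>Rt. \<Sum>t\<leftarrow>tours s. tour_cost c t)
      \<le> (\<Sum>s\<in>Rt. 2.5 * (?W (V0 s) - ?W (Vf s)) + (ellS c R k (V0 s - {s}) - ellS c R k (Uf s)) / beta)"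
  proof (rule sum_mono)
    fix s assume s: "s \<in> Rt"
    show "(\<Sum>t\<leftarrow>tours s. tour_cost c t) \<le> 2.5 * (?W (V0 s) - ?W (Vf s)) + (ellS c R k (V0 s - {s}) - ellS c R k (Uf s)) / beta"
      using conjunct1[OF run[OF s]] unfolding Vf_def Uf_def .
  qed
  also have "\<dots> = 2.5 * ((\<Sum>s\<in>Rt. ?W (V0 s)) - (\<Sum>s\<in>Rt. ?W (Vf s)))
      + ((\<Sum>s\<in>Rt. ellS c R k (V0 s - {s})) - (\<Sum>s\<in>Rt. ellS c R k (Uf s))) / beta"
    by (rule sum_aux)
  also have "\<dots> = 2.5 * (forest_cost c F - forest_cost c (\<Union>s\<in>Rt. tree_edges par s (Vf s)))
      + (ellS c R k Uinit - ellS c R k (\<Union>s\<in>Rt. Uf s)) / beta"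
    using S1 S2 S3 S4 by simp
  finally show ?thesis unfolding Rt_def Vf_def Uf_def .
qed

end
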